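(* Let $A\in\mathbb{R}^{n\times n}$ be symmetric positive definite, $M_0\in\mathbb{R}^{n\times n}$, $R_0=I_n-AM_0$ and $G_0=-AR_0$. For $i\ge1$ let $\mathcal{K}_i(A^2,G_0)=\mathrm{span}\{G_0,A^2G_0,\dots,A^{2(i-1)}G_0\}$. Then a matrix $M_i\in M_0+\mathcal{K}_i(A^2,G_0)$ satisfies $R_i:=I_n-AM_i\perp\mathcal{K}_i(A^2,G_0)$ if and only if $$\|A^{-1}-M_i\|_{F,A}=\min_{M\in M_0+\mathcal{K}_i(A^2,G_0)}\|A^{-1}-M\|_{F,A}.$$ In particular, the NCG iterates (which satisfy the former condition) minimize the Frobenius $A$-norm of the error over $M_0+\mathcal{K}_i(A^2,G_0)$.
   Context: The Frobenius inner product is $(X,Y)_F=\operatorname{tr}(X^TY)$ and $\perp$ denotes orthogonality with respect to it. The Frobenius inner product weighted by $A$ is $(X,Y)_{F,A}:=(AX,Y)_F$, with induced norm $\|X\|_{F,A}:=(X,X)_{F,A}^{1/2}$. The NCG method: $R_i=I_n-AM_i$, $G_i=-AR_i$, $P_0=-G_0$; for $i\ge1$, $P_i\in -G_i+\mathrm{span}\{P_{i-1}\}$ with $(P_i,AP_{i-1})_F=0$; for $i\ge0$, $M_{i+1}\in M_i+\mathrm{span}\{P_i\}$ with $(R_{i+1},P_i)_F=0$ (no breakdown assumed). *)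

theory Defs
  imports "HOL-Analysis.Analysis"
begin

fun mat_pow :: "real^'n^'n \<Rightarrow> nat \<Rightarrow> real^'n^'n" where
  "mat_pow A 0 = mat 1"
| "mat_pow A (Suc k) = A ** mat_pow A k"

definition frob_inner :: "real^'n^'n \<Rightarrow> real^'n^'n \<Rightarrow> real" where
  "frob_inner X Y = trace (transpose X ** Y)"

definition frobA_inner :: "real^'n^'n \<Rightarrow> real^'n^'n \<Rightarrow> real^'n^'n \<Rightarrow> real" where
  "frobA_inner A X Y = frob_inner (A ** X) Y"

definition frobA_norm :: "real^'n^'n \<Rightarrow> real^'n^'n \<Rightarrow> real" where
  "frobA_norm A X = sqrt (frobA_inner A X X)"

definition spd :: "real^'n^'n \<Rightarrow> bool" where
  "spd A \<longleftrightarrow> transpose A = A \<and> (\<forall>x. x \<noteq> 0 \<longrightarrow> x \<bullet> (A *v x) > 0)"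

definition krylov :: "real^'n^'n \<Rightarrow> real^'n^'n \<Rightarrow> nat \<Rightarrow> (real^'n^'n) set" where
  "krylov B G i = span {mat_pow B k ** G | k. k < i}"

end

theory Submission
  imports Defs
begin

lemma fi_sum: "frob_inner (X::real^'n^'n) Y = (\<Sum>i\<in>UNIV. \<Sum>k\<in>UNIV. X$k$i * Y$k$i)"
  by (simp add: frob_inner_def trace_def matrix_matrix_mult_def transpose_def)

lemma fi_sym: "frob_inner (X::real^'n^'n) Y = frob_inner Y X"
  by (simp add: fi_sum mult.commute)

lemma fi_add2: "frob_inner (X::real^'n^'n) (Y + Z) = frob_inner X Y + frob_inner X Z"
  by (simp add: fi_sum algebra_simps sum.distrib)

lemma fi_diff2: "frob_inner (X::real^'n^'n) (Y - Z) = frob_inner X Y - frob_inner X Z"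
  by (simp add: fi_sum algebra_simps sum_subtractf)

lemma fi_scale2: "frob_inner (X::real^'n^'n) (c *\<^sub>R Y) = c * frob_inner X Y"
  by (simp add: fi_sum algebra_simps sum_distrib_left)

lemma mat_scale: "(A::real^'n^'n) ** (c *\<^sub>R X) = c *\<^sub>R (A ** X)"
  by (simp add: vec_eq_iff matrix_matrix_mult_def sum_distrib_left algebra_simps)

lemma mat_diff: "(A::real^'n^'n) ** (X - Y) = A ** X - A ** Y"
  by (simp add: vec_eq_iff matrix_matrix_mult_def sum_subtractf algebra_simps)

lemma fA_sym:
  assumes "transpose A = (A::real^'n^'n)"
  shows "frobA_inner A X Y = frobA_inner A Y X"
proof -
  have "frobA_inner A X Y = trace (transpose X ** (A ** Y))"
    unfolding frobA_inner_def frob_inner_def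
    by (simp add: matrix_transpose_mul assms matrix_mul_assoc)
  also have "\<dots> = frob_inner X (A ** Y)" by (simp add: frob_inner_def)
  also have "\<dots> = frobA_inner A Y X" by (simp add: frobA_inner_def fi_sym)
  finally show ?thesis .
qed

lemma fA_diff2: "frobA_inner A X (Y - Z) = frobA_inner A X Y - frobA_inner A X Z"
  by (simp add: frobA_inner_def fi_diff2)

lemma fA_scale2: "frobA_inner A X (c *\<^sub>R Y) = c * frobA_inner A X Y"
  by (simp add: frobA_inner_def fi_scale2)

lemma fA_nonneg:
  assumes "spd (A::real^'n^'n)"
  shows "frobA_inner A X X \<ge> 0"
proof -
  define x where "x i = (\<chi> k. X$k$i)" for i
  have "frobA_inner A X X = (\<Sum>i\<in>UNIV. x i \<bullet> (A *v x i))"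
    unfolding frobA_inner_def fi_sum x_def
    by (simp add: inner_vec_def matrix_matrix_mult_def matrix_vector_mult_def mult.commute)
  also have "\<dots> \<ge> 0"
  proof (rule sum_nonneg)
    fix i
    show "0 \<le> x i \<bullet> (A *v x i)"
      using assms unfolding spd_def
      by (cases "x i = 0") (auto intro: less_imp_le)
  qed
  finally show ?thesis .
qed


lemma fA_expand:
  assumes "transpose A = (A::real^'n^'n)"
  shows "frobA_inner A (E - D) (E - D) = frobA_inner A E E - 2 * frobA_inner A E D + frobA_inner A D D"
proof -
  have "frobA_inner A (E - D) (E - D) = frobA_inner A (E - D) E - frobA_inner A (E - D) D"
    by (simp add: fA_diff2)
  also have "frobA_inner A (E - D) E = frobA_inner A E E - frobA_inner A E D"
    using fA_sym[OF assms, of "E - D" E] fA_diff2[of A E E D] fA_sym[OF assms, of D E] by simp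
  also have "frobA_inner A (E - D) D = frobA_inner A D E - frobA_inner A D D"
    using fA_sym[OF assms, of "E - D" D] fA_diff2[of A D E D] by simp
  finally show ?thesis using fA_sym[OF assms, of D E] by simp
qed

theorem theorem3:
  fixes A M0 Mi :: "real^'n^'n" and i :: nat
  assumes "spd A"
    and "i \<ge> 1"
    and "Mi \<in> (\<lambda>K. M0 + K) ` krylov (A ** A) (- A ** (mat 1 - A ** M0)) i"
  shows "(\<forall>X \<in> krylov (A ** A) (- A ** (mat 1 - A ** M0)) i.
            frob_inner (mat 1 - A ** Mi) X = 0)
     \<longleftrightarrow> (\<forall>M \<in> (\<lambda>K. M0 + K) ` krylov (A ** A) (- A ** (mat 1 - A ** M0)) i.
            frobA_norm A (matrix_inv A - Mi) \<le> frobA_norm A (matrix_inv A - M))"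
proof -
  define K where "K = krylov (A ** A) (- A ** (mat 1 - A ** M0)) i"
  have subK: "subspace K" unfolding K_def krylov_def by (rule subspace_span)
  have symA: "transpose A = A" using assms(1) unfolding spd_def by simp
  have "\<forall>x. A *v x = 0 \<longrightarrow> x = 0"
  proof (intro allI impI)
    fix x assume "A *v x = 0"
    then have "x \<bullet> (A *v x) = 0" by simp
    then show "x = 0" using assms(1) unfolding spd_def by force
  qed
  then have inv: "invertible A"
    using invertible_left_inverse matrix_left_invertible_ker by blast
  have AAi: "A ** matrix_inv A = mat 1"
    using inv unfolding invertible_def matrix_inv_def by (rule someI_ex[THEN conjunct1])
  obtain Ki where Ki: "Ki \<in> K" "Mi = M0 + Ki" using assms(3) unfolding K_def by blast
  define E where "E = matrix_inv A - Mi"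
  have key: "frob_inner (mat 1 - A ** Mi) X = frobA_inner A E X" for X
    unfolding frobA_inner_def E_def by (simp add: mat_diff AAi)
  have nrm: "frobA_norm A E \<le> frobA_norm A (E - D) \<longleftrightarrow>
      2 * frobA_inner A E D \<le> frobA_inner A D D" for D
    unfolding frobA_norm_def real_sqrt_le_iff fA_expand[OF symA] by linarith
  show ?thesis
    unfolding K_def[symmetric] E_def[symmetric]
  proof
    assume orth: "\<forall>X\<in>K. frob_inner (mat 1 - A ** Mi) X = 0"
    show "\<forall>M\<in>(\<lambda>K. M0 + K) ` K. frobA_norm A E \<le> frobA_norm A (matrix_inv A - M)"
    proof
      fix M assume "M \<in> (\<lambda>K. M0 + K) ` K"
      then obtain Km where Km: "Km \<in> K" "M = M0 + Km" by blast
      define D where "D = Km - Ki"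
      have DK: "D \<in> K" unfolding D_def using Km Ki subK by (simp add: subspace_diff)
      have "matrix_inv A - M = E - D" unfolding E_def D_def Km Ki by simp
      moreover have "frobA_inner A E D = 0" using orth DK key by simp
      ultimately show "frobA_norm A E \<le> frobA_norm A (matrix_inv A - M)"
        using nrm[of D] fA_nonneg[OF assms(1), of D] by simp
    qed
  next
    assume mn: "\<forall>M\<in>(\<lambda>K. M0 + K) ` K. frobA_norm A E \<le> frobA_norm A (matrix_inv A - M)"
    show "\<forall>X\<in>K. frob_inner (mat 1 - A ** Mi) X = 0"
    proof
      fix X assume XK: "X \<in> K"
      define c where "c = frobA_inner A E X"
      define q where "q = frobA_inner A X X"
      have q0: "q \<ge> 0" unfolding q_def by (rule fA_nonneg[OF assms(1)])
      define t where "t = c / (q + 1)"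
      have "Ki + t *\<^sub>R X \<in> K" using Ki XK subK by (simp add: subspace_add subspace_scale)
      then have "Mi + t *\<^sub>R X \<in> (\<lambda>K. M0 + K) ` K" using Ki by (auto simp: add.assoc)
      moreover have "matrix_inv A - (Mi + t *\<^sub>R X) = E - t *\<^sub>R X" unfolding E_def by simp
      ultimately have "frobA_norm A E \<le> frobA_norm A (E - t *\<^sub>R X)" using mn by metis
      then have "2 * frobA_inner A E (t *\<^sub>R X) \<le> frobA_inner A (t *\<^sub>R X) (t *\<^sub>R X)"
        using nrm by blast
      moreover have "frobA_inner A (t *\<^sub>R X) (t *\<^sub>R X) = t * t * q"
        unfolding q_def using fA_scale2[of A "t *\<^sub>R X" t X] fA_sym[OF symA, of "t *\<^sub>R X" X]
          fA_scale2[of A X t X] by simp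
      moreover have "frobA_inner A E (t *\<^sub>R X) = t * c" unfolding c_def by (simp add: fA_scale2)
      ultimately have ineq: "2 * t * c \<le> t * t * q" by simp
      have "c = 0"
      proof (rule ccontr)
        assume "c \<noteq> 0"
        have qp: "q + 1 > 0" using q0 by simp
        have "2 * t * c * (q+1) * (q+1) \<le> t * t * q * (q+1) * (q+1)"
          using ineq qp by (simp add: mult_right_mono)
        moreover have "2 * t * c * (q+1) * (q+1) = 2 * c * c * (q+1)" unfolding t_def using qp by (simp add: field_simps)
        moreover have "t * t * q * (q+1) * (q+1) = c * c * q"
        proof -
          have tq: "t * (q+1) = c" unfolding t_def using qp by simp
          have "t * t * q * (q+1) * (q+1) = (t * (q+1)) * (t * (q+1)) * q" by (simp add: algebra_simps)
          then show ?thesis using tq by simp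
        qed
        ultimately have "c * c * (q + 2) \<le> 0" by (simp add: algebra_simps)
        moreover have "c * c > 0" using \<open>c \<noteq> 0\<close> by (auto simp add: zero_less_mult_iff linorder_neq_iff)
        ultimately show False using q0 mult_pos_pos[of "c * c" "q + 2"] by linarith
      qed
      then show "frob_inner (mat 1 - A ** Mi) X = 0" using key c_def by simp
    qed
  qed
qed

end
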